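(* Let $\{\hat x_t\}_{t\ge0}$, $\hat x_t=\frac1M\sum_m x_t^m$, be the average points generated by Algorithm SAVIC (described in the context), and let $\hat D^t$ denote the scaling matrix at iteration $t$, obtained by the update rules in the context, where $D^0$ and all $H^t$ are diagonal with $\alpha I\preceq D^0\preceq\Gamma I$ and $\alpha I\preceq H^t\preceq\Gamma I$ for some $0<\alpha\le\Gamma$. Then $$\|\hat x_{t+1}-x_*\|^2_{\hat D^{t+1}}\le\big(1+(1-\beta_{t+1})C\big)\|\hat x_{t+1}-x_*\|^2_{\hat D^t},$$ with $C=\frac{\Gamma^2}{2\alpha^2}$ for the squared update rule and $C=\frac{2\Gamma}{\alpha}$ for the linear update rule. In particular, if $\beta_{t+1}\ge1-\frac{\gamma\mu\alpha^2}{\Gamma^3}$ (squared rule) or $\beta_{t+1}\ge1-\frac{\gamma\mu\alpha}{4\Gamma^2}$ (linear rule), then $$\|\hat x_{t+1}-x_*\|^2_{\hat D^{t+1}}\le\left(1+\frac{\gamma\mu}{2\Gamma}\right)\|\hat x_{t+1}-x_*\|^2_{\hat D^t}.$$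
   Context: Problem: minimize $f(x)=\frac1M\sum_{m=1}^Mf_m(x)$ over $\mathbb R^d$, $x_*$ a solution; $\mu\ge0$ is the strong convexity constant of the $f_m$, $\gamma>0$ the stepsize. For a positive definite matrix $A$, $\|x\|_A^2=\langle x,Ax\rangle$. Update rules: diagonal matrices $D^t$ satisfy either the squared rule $(D^t)^2=\beta_t(D^{t-1})^2+(1-\beta_t)(H^t)^2$ or the linear rule $D^t=\beta_tD^{t-1}+(1-\beta_t)H^t$, with $\beta_t\in[0,1]$ and $H^t$ diagonal; then $(\hat D^t)_{ii}=\max\{\alpha,|D^t_{ii}|\}$. Algorithm SAVIC: stepsize $\gamma$, $x_0^m=x_0$, synchronization times $t_0=0<t_1<\dots$; at $t=t_p$ the preconditioner $\hat D^{t_p}$ is updated and is used (by all clients) for all $t_p\le t<t_{p+1}$ (so the scaling matrix at iteration $t$ is $\hat D^{t_p}$); client $m$ samples $z_m\sim\mathcal D_m$ and sets $x_{t+1}^m=\frac1M\sum_j(x_t^j-\gamma(\hat D^{t_p})^{-1}\nabla f_j(x_t^j,z_j))$ if $t=t_p$ for some $p$, else $x_{t+1}^m=x_t^m-\gamma(\hat D^{t_p})^{-1}\nabla f_m(x_t^m,z_m)$. *)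

theory Defs
  imports "HOL-Analysis.Analysis"
begin

type_synonym 'n mat = "real ^ 'n ^ 'n"

definition is_diag :: "'n::finite mat \<Rightarrow> bool" where
  "is_diag A \<longleftrightarrow> (\<forall>i j. i \<noteq> j \<longrightarrow> A $ i $ j = 0)"

definition loewner_le :: "'n::finite mat \<Rightarrow> 'n mat \<Rightarrow> bool" where
  "loewner_le A B \<longleftrightarrow> (\<forall>x. x \<bullet> (A *v x) \<le> x \<bullet> (B *v x))"

definition wnorm2 :: "real ^ 'n::finite \<Rightarrow> 'n mat \<Rightarrow> real" where
  "wnorm2 x A = x \<bullet> (A *v x)"

definition clip :: "real \<Rightarrow> 'n::finite mat \<Rightarrow> 'n mat" where
  "clip \<alpha> D = (\<chi> i j. if i = j then max \<alpha> \<bar>D $ i $ i\<bar> else 0)"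

definition update_rule :: "bool \<Rightarrow> real \<Rightarrow> 'n::finite mat \<Rightarrow> 'n mat \<Rightarrow> 'n mat \<Rightarrow> bool" where
  "update_rule sq \<beta> Dprev H D \<longleftrightarrow>
     (if sq then D ** D = \<beta> *\<^sub>R (Dprev ** Dprev) + (1 - \<beta>) *\<^sub>R (H ** H)
      else D = \<beta> *\<^sub>R Dprev + (1 - \<beta>) *\<^sub>R H)"

definition strongly_convex :: "real \<Rightarrow> ('a::real_inner \<Rightarrow> real) \<Rightarrow> bool" where
  "strongly_convex \<mu> f \<longleftrightarrow> (\<forall>x y s. 0 \<le> s \<and> s \<le> 1 \<longrightarrow>
     f (s *\<^sub>R x + (1 - s) *\<^sub>R y) \<le> s * f x + (1 - s) * f y - \<mu> / 2 * s * (1 - s) * (norm (x - y))\<^sup>2)"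

text \<open>The SAVIC recursion, for a fixed realization of the samples.
  x t m : iterate of client m (m < M) at time t; z t m : sample drawn by client m at time t;
  g m y \<zeta> : stochastic gradient of f_m at y with sample \<zeta>; S t : scaling matrix at iteration t;
  sync t : t is a synchronization time.\<close>
definition savic_iterates ::
  "nat \<Rightarrow> real \<Rightarrow> (nat \<Rightarrow> bool) \<Rightarrow> (nat \<Rightarrow> 'n::finite mat) \<Rightarrow> (nat \<Rightarrow> real ^ 'n \<Rightarrow> 'z \<Rightarrow> real ^ 'n)
     \<Rightarrow> (nat \<Rightarrow> nat \<Rightarrow> 'z) \<Rightarrow> real ^ 'n \<Rightarrow> (nat \<Rightarrow> nat \<Rightarrow> real ^ 'n) \<Rightarrow> bool" where
  "savic_iterates M \<gamma> sync S g z x0 x \<longleftrightarrow>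
     (\<forall>m<M. x 0 m = x0) \<and>
     (\<forall>t. \<forall>m<M. x (Suc t) m =
        (if sync t then (1 / real M) *\<^sub>R (\<Sum>j<M. x t j - \<gamma> *\<^sub>R (matrix_inv (S t) *v g j (x t j) (z t j)))
         else x t m - \<gamma> *\<^sub>R (matrix_inv (S t) *v g m (x t m) (z t m))))"

end

theory Submission
  imports Defs
begin

lemma sum_single:
  fixes f :: "'n::finite \<Rightarrow> real"
  assumes "\<And>k. k \<noteq> i \<Longrightarrow> f k = 0" shows "(\<Sum>k\<in>UNIV. f k) = f i"
proof -
  have "(\<Sum>k\<in>UNIV. f k) = (\<Sum>k\<in>{i}. f k)"
    by (rule sum.mono_neutral_right) (use assms in auto)
  then show ?thesis by simp
qed

lemma loewner_diag:
  fixes A B :: "real^'n::finite^'n"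
  assumes "loewner_le A B" shows "A $ i $ i \<le> B $ i $ i"
proof -
  have "axis i 1 \<bullet> (A *v axis i 1) \<le> axis i 1 \<bullet> (B *v axis i 1)"
    using assms unfolding loewner_le_def by blast
  moreover have "axis i 1 \<bullet> (C *v axis i 1) = C $ i $ i" for C :: "real^'n^'n"
  proof -
    have "(C *v axis i 1) $ i = C $ i $ i"
      unfolding matrix_vector_mult_def axis_def
      by (simp, subst sum_single[of i]) auto
    then show ?thesis unfolding inner_vec_def
      by (subst sum_single[of i]) (auto simp: axis_def)
  qed
  ultimately show ?thesis by simp
qed

lemma diag_sq:
  fixes D :: "real^'n::finite^'n"
  assumes "is_diag D" shows "(D ** D) $ i $ i = (D $ i $ i)^2"
proof -
  have "(D ** D) $ i $ i = (\<Sum>k\<in>UNIV. D $ i $ k * D $ k $ i)"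
    by (simp add: matrix_matrix_mult_def)
  also have "\<dots> = D $ i $ i * D $ i $ i"
    by (rule sum_single) (use assms in \<open>auto simp: is_diag_def\<close>)
  finally show ?thesis by (simp add: power2_eq_square)
qed

lemma wnorm2_clip:
  fixes v :: "real^'n::finite"
  shows "wnorm2 v (clip a D) = (\<Sum>i\<in>UNIV. max a \<bar>D $ i $ i\<bar> * (v $ i)^2)"
proof -
  have "(clip a D *v v) $ i = max a \<bar>D $ i $ i\<bar> * v $ i" for i
    unfolding clip_def matrix_vector_mult_def
    by (simp, subst sum_single[of i]) auto
  then show ?thesis unfolding wnorm2_def inner_vec_def
    by (simp add: power2_eq_square mult_ac)
qed

lemma sq_step:
  fixes c c' h e a G :: real
  assumes "0 < a" "a \<le> c" "a \<le> h" "h \<le> G" "0 \<le> e" "e \<le> 1" "0 \<le> c'"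
    and "c'^2 = (1-e)*c^2 + e*h^2"
  shows "c' \<le> (1 + e * (G^2 / (2*a^2))) * c"
proof -
  have c2: "c^2 \<ge> a^2" using assms by (simp add: power_mono)
  have h2: "h^2 \<le> G^2" using assms by (intro power_mono) auto
  have "e*h^2 \<le> e*G^2" using assms h2 by (simp add: mult_left_mono)
  moreover have "e*c^2 \<ge> 0" using assms by simp
  ultimately have "c'^2 \<le> c^2 + e*G^2" using assms(8) by (simp add: algebra_simps)
  also have "e*G^2 \<le> c^2 * (e*G^2/a^2)"
  proof -
    have "c^2 * (e*G^2/a^2) = (c^2/a^2) * (e*G^2)" by simp
    moreover have "c^2/a^2 \<ge> 1" using c2 assms by simp
    moreover have "e*G^2 \<ge> 0" using assms by simp
    ultimately show ?thesis by (metis mult_right_mono mult_1)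
  qed
  also have "c^2 + c^2 * (e*G^2/a^2) \<le> ((1 + e * (G^2 / (2*a^2))) * c)^2"
  proof -
    define q where "q = e * (G^2 / (2*a^2))"
    have "((1 + q) * c)^2 = c^2 + c^2*(2*q) + (q*c)^2" by (simp add: power2_eq_square algebra_simps)
    moreover have "2*q = e*G^2/a^2" unfolding q_def using assms by simp
    ultimately show ?thesis unfolding q_def[symmetric] by simp
  qed
  finally have "c'^2 \<le> ((1 + e * (G^2 / (2*a^2))) * c)^2" by simp
  moreover have "0 \<le> (1 + e * (G^2 / (2*a^2))) * c" using assms by simp
  ultimately show ?thesis using power2_le_imp_le by blast
qed

lemma lin_step:
  fixes c h e a G :: real
  assumes "0 < a" "a \<le> c" "a \<le> h" "h \<le> G" "0 \<le> e" "e \<le> 1"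
  shows "(1-e)*c + e*h \<le> (1 + e * (2*G/a)) * c"
proof -
  have "e*h \<le> e*G" using assms by (simp add: mult_left_mono)
  also have "e*G \<le> e*(2*G/a)*c"
  proof -
    have ca: "c/a \<ge> 1" using assms by simp
    have "G \<le> 2*G" using assms by simp
    also have "\<dots> \<le> (2*G)*(c/a)" using ca assms mult_left_mono[of 1 "c/a" "2*G"] by simp
    finally have "G \<le> 2*G/a*c" by simp
    then show ?thesis using assms by (metis mult.assoc mult_left_mono)
  qed
  finally have X: "e*h \<le> e*(2*G/a)*c" .
  have "e*c \<ge> 0" using assms by simp
  moreover have "(1 + e * (2*G/a)) * c = c + e*(2*G/a)*c" by (simp add: algebra_simps)
  ultimately show ?thesis using X by (simp add: algebra_simps)
qed

theorem corollary1:
  fixes M :: nat and f :: "nat \<Rightarrow> real ^ 'n::finite \<Rightarrow> real"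
    and xs x0 :: "real ^ 'n" and \<mu> \<gamma> \<alpha> \<Gamma> :: real
    and sq :: bool and \<beta> :: "nat \<Rightarrow> real"
    and D H :: "nat \<Rightarrow> real ^ 'n ^ 'n" and sync :: "nat \<Rightarrow> bool"
    and g :: "nat \<Rightarrow> real ^ 'n \<Rightarrow> 'z \<Rightarrow> real ^ 'n" and z :: "nat \<Rightarrow> nat \<Rightarrow> 'z"
    and x :: "nat \<Rightarrow> nat \<Rightarrow> real ^ 'n"
  assumes M: "M \<ge> 1"
    and mu: "\<mu> \<ge> 0" and sc: "\<And>m. m < M \<Longrightarrow> strongly_convex \<mu> (f m)"
    and opt: "\<And>y. (1 / real M) * (\<Sum>m<M. f m xs) \<le> (1 / real M) * (\<Sum>m<M. f m y)"
    and gam: "\<gamma> > 0"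
    and alpha: "0 < \<alpha>" "\<alpha> \<le> \<Gamma>"
    and D0: "is_diag (D 0)" "loewner_le (\<alpha> *\<^sub>R mat 1) (D 0)" "loewner_le (D 0) (\<Gamma> *\<^sub>R mat 1)"
    and Hb: "\<And>t. is_diag (H t)" "\<And>t. loewner_le (\<alpha> *\<^sub>R mat 1) (H t)"
            "\<And>t. loewner_le (H t) (\<Gamma> *\<^sub>R mat 1)"
    and beta: "\<And>t. 0 \<le> \<beta> t \<and> \<beta> t \<le> 1"
    and sync0: "sync 0"
    and Dupd: "\<And>t. sync (Suc t) \<Longrightarrow> is_diag (D (Suc t)) \<and> update_rule sq (\<beta> (Suc t)) (D t) (H (Suc t)) (D (Suc t))"
    and Dkeep: "\<And>t. \<not> sync (Suc t) \<Longrightarrow> D (Suc t) = D t"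
    and iter: "savic_iterates M \<gamma> sync (\<lambda>t. clip \<alpha> (D t)) g z x0 x"
  defines "xhat \<equiv> \<lambda>t. (1 / real M) *\<^sub>R (\<Sum>m<M. x t m)"
    and "Dh \<equiv> \<lambda>t. clip \<alpha> (D t)"
    and "C \<equiv> (if sq then \<Gamma>\<^sup>2 / (2 * \<alpha>\<^sup>2) else 2 * \<Gamma> / \<alpha>)"
  shows "(\<forall>t. wnorm2 (xhat (Suc t) - xs) (Dh (Suc t))
              \<le> (1 + (1 - \<beta> (Suc t)) * C) * wnorm2 (xhat (Suc t) - xs) (Dh t))
       \<and> (\<forall>t. \<beta> (Suc t) \<ge> (if sq then 1 - \<gamma> * \<mu> * \<alpha>\<^sup>2 / \<Gamma> ^ 3 else 1 - \<gamma> * \<mu> * \<alpha> / (4 * \<Gamma>\<^sup>2))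
              \<longrightarrow> wnorm2 (xhat (Suc t) - xs) (Dh (Suc t))
                    \<le> (1 + \<gamma> * \<mu> / (2 * \<Gamma>)) * wnorm2 (xhat (Suc t) - xs) (Dh t))"
proof -
  have Hd: "\<alpha> \<le> H t $ i $ i \<and> H t $ i $ i \<le> \<Gamma>" for t i
    using loewner_diag[OF Hb(2)[of t], of i] loewner_diag[OF Hb(3)[of t], of i]
    by (simp add: mat_def)
  have inv: "is_diag (D t) \<and> (\<forall>i. \<alpha> \<le> \<bar>D t $ i $ i\<bar> \<and> \<bar>D t $ i $ i\<bar> \<le> \<Gamma> \<and> (\<not> sq \<longrightarrow> \<alpha> \<le> D t $ i $ i))" for t
  proof (induction t)
    case 0
    have "\<alpha> \<le> D 0 $ i $ i \<and> D 0 $ i $ i \<le> \<Gamma>" for i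
      using loewner_diag[OF D0(2), of i] loewner_diag[OF D0(3), of i]
      by (simp add: mat_def)
    moreover have "\<bar>D 0 $ i $ i\<bar> = D 0 $ i $ i" for i
      using calculation[of i] alpha by simp
    ultimately show ?case using D0(1) by simp
  next
    case (Suc t)
    show ?case
    proof (cases "sync (Suc t)")
      case False
      then show ?thesis using Suc Dkeep by simp
    next
      case True
      note U = Dupd[OF True]
      have "\<alpha> \<le> \<bar>D (Suc t) $ i $ i\<bar> \<and> \<bar>D (Suc t) $ i $ i\<bar> \<le> \<Gamma> \<and> (\<not> sq \<longrightarrow> \<alpha> \<le> D (Suc t) $ i $ i)" for i
      proof (cases sq)
        case True
        then have E: "D (Suc t) ** D (Suc t) = \<beta> (Suc t) *\<^sub>R (D t ** D t) + (1 - \<beta> (Suc t)) *\<^sub>R (H (Suc t) ** H (Suc t))"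
          using U by (simp add: update_rule_def)
        have "(D (Suc t) ** D (Suc t)) $ i $ i = \<beta> (Suc t) * (D t ** D t) $ i $ i + (1 - \<beta> (Suc t)) * (H (Suc t) ** H (Suc t)) $ i $ i"
          by (subst E) simp
        then have E2: "(D (Suc t) $ i $ i)^2 = \<beta> (Suc t) * (D t $ i $ i)^2 + (1 - \<beta> (Suc t)) * (H (Suc t) $ i $ i)^2"
          using U Suc.IH Hb(1) by (simp add: diag_sq)
        define b where "b = \<beta> (Suc t)"
        define d where "d = D t $ i $ i"
        define h where "h = H (Suc t) $ i $ i"
        have b: "0 \<le> b" "b \<le> 1" using beta b_def by auto
        have ad: "\<alpha> \<le> \<bar>d\<bar>" "\<bar>d\<bar> \<le> \<Gamma>" using Suc.IH unfolding d_def by auto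
        have "\<alpha>^2 \<le> \<bar>d\<bar>^2" by (rule power_mono) (use ad alpha in auto)
        moreover have "\<bar>d\<bar>^2 \<le> \<Gamma>^2" by (rule power_mono) (use ad alpha in auto)
        ultimately have d: "\<alpha>^2 \<le> d^2" "d^2 \<le> \<Gamma>^2" by simp_all
        have h: "\<alpha>^2 \<le> h^2" "h^2 \<le> \<Gamma>^2" using Hd[of "Suc t" i] alpha unfolding h_def
          by (intro power_mono; linarith)+
        have "b*\<alpha>^2 + (1-b)*\<alpha>^2 \<le> b*d^2 + (1-b)*h^2"
          using b d h by (intro add_mono mult_left_mono) auto
        moreover have "b*d^2 + (1-b)*h^2 \<le> b*\<Gamma>^2 + (1-b)*\<Gamma>^2"
          using b d h by (intro add_mono mult_left_mono) auto
        ultimately have "\<alpha>^2 \<le> (D (Suc t) $ i $ i)^2 \<and> (D (Suc t) $ i $ i)^2 \<le> \<Gamma>^2"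
          using E2 unfolding b_def d_def h_def by (simp add: algebra_simps)
        then have "\<bar>\<alpha>\<bar> \<le> \<bar>D (Suc t) $ i $ i\<bar>" "\<bar>D (Suc t) $ i $ i\<bar> \<le> \<bar>\<Gamma>\<bar>"
          by (simp_all only: abs_le_square_iff)
        then show ?thesis using True alpha by simp
      next
        case False
        then have E: "D (Suc t) $ i $ i = \<beta> (Suc t) * D t $ i $ i + (1 - \<beta> (Suc t)) * H (Suc t) $ i $ i"
          using U by (simp add: update_rule_def)
        define b where "b = \<beta> (Suc t)"
        define d where "d = D t $ i $ i"
        define h where "h = H (Suc t) $ i $ i"
        have b: "0 \<le> b" "b \<le> 1" using beta b_def by auto
        have "\<alpha> \<le> D t $ i $ i \<and> \<bar>D t $ i $ i\<bar> \<le> \<Gamma>" using Suc.IH False by blast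
        then have d: "\<alpha> \<le> d" "d \<le> \<Gamma>" unfolding d_def by (auto simp: abs_le_iff)
        have h: "\<alpha> \<le> h" "h \<le> \<Gamma>" using Hd unfolding h_def by auto
        have "b*\<alpha> + (1-b)*\<alpha> \<le> b*d + (1-b)*h"
          using b d h by (intro add_mono mult_left_mono) auto
        moreover have "b*d + (1-b)*h \<le> b*\<Gamma> + (1-b)*\<Gamma>"
          using b d h by (intro add_mono mult_left_mono) auto
        ultimately have "\<alpha> \<le> D (Suc t) $ i $ i \<and> D (Suc t) $ i $ i \<le> \<Gamma>"
          using E unfolding b_def d_def h_def by (simp add: algebra_simps)
        then show ?thesis using alpha by simp
      qed
      then show ?thesis using U by blast
    qed
  qed
  have Cnn: "C \<ge> 0" unfolding C_def using alpha by simp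
  have step: "max \<alpha> \<bar>D (Suc t) $ i $ i\<bar> \<le> (1 + (1 - \<beta> (Suc t)) * C) * max \<alpha> \<bar>D t $ i $ i\<bar>" for t i
  proof -
    define b where "b = \<beta> (Suc t)"
    have b: "0 \<le> b" "b \<le> 1" using beta b_def by auto
    have m1: "max \<alpha> \<bar>D (Suc t) $ i $ i\<bar> = \<bar>D (Suc t) $ i $ i\<bar>" using inv[of "Suc t"] by simp
    have m0: "max \<alpha> \<bar>D t $ i $ i\<bar> = \<bar>D t $ i $ i\<bar>" using inv[of t] by simp
    show ?thesis
    proof (cases "sync (Suc t)")
      case False
      have "1 * \<bar>D t $ i $ i\<bar> \<le> (1 + (1 - b) * C) * \<bar>D t $ i $ i\<bar>"
        using b Cnn by (intro mult_right_mono) auto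
      then show ?thesis using False Dkeep m0 m1 b_def by simp
    next
      case True
      note U = Dupd[OF True]
      show ?thesis
      proof (cases sq)
        case True
        then have E: "D (Suc t) ** D (Suc t) = \<beta> (Suc t) *\<^sub>R (D t ** D t) + (1 - \<beta> (Suc t)) *\<^sub>R (H (Suc t) ** H (Suc t))"
          using U by (simp add: update_rule_def)
        have "(D (Suc t) ** D (Suc t)) $ i $ i = \<beta> (Suc t) * (D t ** D t) $ i $ i + (1 - \<beta> (Suc t)) * (H (Suc t) ** H (Suc t)) $ i $ i"
          by (subst E) simp
        then have E2: "\<bar>D (Suc t) $ i $ i\<bar>^2 = (1 - (1-b)) * \<bar>D t $ i $ i\<bar>^2 + (1 - b) * (H (Suc t) $ i $ i)^2"
          using U inv[of t] Hb(1) by (simp add: diag_sq b_def)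
        have "\<bar>D (Suc t) $ i $ i\<bar> \<le> (1 + (1-b) * (\<Gamma>^2 / (2*\<alpha>^2))) * \<bar>D t $ i $ i\<bar>"
          by (rule sq_step[OF alpha(1) _ _ _ _ _ _ E2]) (use inv[of t] Hd[of "Suc t" i] b in auto)
        then show ?thesis using m0 m1 True unfolding C_def b_def by simp
      next
        case False
        then have E: "D (Suc t) $ i $ i = (1 - (1-b)) * D t $ i $ i + (1 - b) * H (Suc t) $ i $ i"
          using U by (simp add: update_rule_def b_def)
        have "(1 - (1-b)) * D t $ i $ i + (1 - b) * H (Suc t) $ i $ i \<le> (1 + (1-b) * (2*\<Gamma>/\<alpha>)) * D t $ i $ i"
          by (rule lin_step[OF alpha(1)]) (use inv[of t] Hd[of "Suc t" i] b False in auto)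
        moreover have "\<bar>D (Suc t) $ i $ i\<bar> = D (Suc t) $ i $ i" "\<bar>D t $ i $ i\<bar> = D t $ i $ i"
          using inv[of t] inv[of "Suc t"] False alpha by (meson abs_of_pos less_le_trans)+
        ultimately show ?thesis using m0 m1 False E unfolding C_def b_def by simp
      qed
    qed
  qed
  have P1: "wnorm2 v (Dh (Suc t)) \<le> (1 + (1 - \<beta> (Suc t)) * C) * wnorm2 v (Dh t)" for v t
  proof -
    have "wnorm2 v (Dh (Suc t)) = (\<Sum>i\<in>UNIV. max \<alpha> \<bar>D (Suc t) $ i $ i\<bar> * (v $ i)^2)"
      unfolding Dh_def by (simp add: wnorm2_clip)
    also have "\<dots> \<le> (\<Sum>i\<in>UNIV. (1 + (1 - \<beta> (Suc t)) * C) * max \<alpha> \<bar>D t $ i $ i\<bar> * (v $ i)^2)"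
      by (intro sum_mono mult_right_mono step) auto
    also have "\<dots> = (1 + (1 - \<beta> (Suc t)) * C) * wnorm2 v (Dh t)"
      unfolding Dh_def by (simp add: wnorm2_clip sum_distrib_left mult.assoc)
    finally show ?thesis .
  qed
  have nn: "wnorm2 v (Dh t) \<ge> 0" for v t
    unfolding Dh_def wnorm2_clip by (intro sum_nonneg mult_nonneg_nonneg) auto
  have P2: "(1 - \<beta> (Suc t)) * C \<le> \<gamma> * \<mu> / (2 * \<Gamma>)"
    if "\<beta> (Suc t) \<ge> (if sq then 1 - \<gamma> * \<mu> * \<alpha>\<^sup>2 / \<Gamma> ^ 3 else 1 - \<gamma> * \<mu> * \<alpha> / (4 * \<Gamma>\<^sup>2))" for t
  proof (cases sq)
    case True
    then have "1 - \<beta> (Suc t) \<le> \<gamma> * \<mu> * \<alpha>\<^sup>2 / \<Gamma> ^ 3" using that by simp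
    then have "(1 - \<beta> (Suc t)) * C \<le> (\<gamma> * \<mu> * \<alpha>\<^sup>2 / \<Gamma> ^ 3) * C"
      using Cnn by (rule mult_right_mono)
    also have "\<dots> = \<gamma> * \<mu> / (2 * \<Gamma>)" unfolding C_def using True alpha
      by (simp add: field_simps power2_eq_square power3_eq_cube)
    finally show ?thesis .
  next
    case False
    then have "1 - \<beta> (Suc t) \<le> \<gamma> * \<mu> * \<alpha> / (4 * \<Gamma>\<^sup>2)" using that by simp
    then have "(1 - \<beta> (Suc t)) * C \<le> (\<gamma> * \<mu> * \<alpha> / (4 * \<Gamma>\<^sup>2)) * C"
      using Cnn by (rule mult_right_mono)
    also have "\<dots> = \<gamma> * \<mu> / (2 * \<Gamma>)" unfolding C_def using False alpha
      by (simp add: field_simps power2_eq_square)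
    finally show ?thesis .
  qed
  show ?thesis
  proof (intro conjI allI impI)
    fix t show "wnorm2 (xhat (Suc t) - xs) (Dh (Suc t))
              \<le> (1 + (1 - \<beta> (Suc t)) * C) * wnorm2 (xhat (Suc t) - xs) (Dh t)" by (rule P1)
  next
    fix t assume a: "\<beta> (Suc t) \<ge> (if sq then 1 - \<gamma> * \<mu> * \<alpha>\<^sup>2 / \<Gamma> ^ 3 else 1 - \<gamma> * \<mu> * \<alpha> / (4 * \<Gamma>\<^sup>2))"
    have "(1 + (1 - \<beta> (Suc t)) * C) * wnorm2 (xhat (Suc t) - xs) (Dh t)
        \<le> (1 + \<gamma> * \<mu> / (2 * \<Gamma>)) * wnorm2 (xhat (Suc t) - xs) (Dh t)"
      using P2[OF a] nn by (intro mult_right_mono) auto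
    then show "wnorm2 (xhat (Suc t) - xs) (Dh (Suc t))
                    \<le> (1 + \<gamma> * \<mu> / (2 * \<Gamma>)) * wnorm2 (xhat (Suc t) - xs) (Dh t)"
      using P1 order_trans by blast
  qed
qed

end
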